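(* Let $X$ be a Tychonoff space. The following are equivalent: (1) $X$ is dense-pseudocompact; (2) for every continuous function $f\colon X\to\mathbb{R}$, the range $f(X)$ is finite; (3) $X$ is finite; (4) $X$ is hereditarily pseudocompact (every subspace of $X$ is pseudocompact).
   Context: A space is pseudocompact if every continuous real-valued function on it is bounded. A space $X$ is dense-pseudocompact if every dense subset of $X$ (with the subspace topology) is pseudocompact. *)

theory Defs
  imports "HOL-Analysis.Analysis"
begin

definition tychonoff_space :: "'a topology \<Rightarrow> bool" where
  "tychonoff_space X \<longleftrightarrow> completely_regular_space X \<and> t1_space X"

definition pseudocompact_space :: "'a topology \<Rightarrow> bool" where
  "pseudocompact_space X \<longleftrightarrow>
     (\<forall>f::'a \<Rightarrow> real. continuous_map X euclideanreal f \<longrightarrow> bounded (f ` topspace X))"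

definition dense_pseudocompact_space :: "'a topology \<Rightarrow> bool" where
  "dense_pseudocompact_space X \<longleftrightarrow>
     (\<forall>D. D \<subseteq> topspace X \<and> X closure_of D = topspace X \<longrightarrow> pseudocompact_space (subtopology X D))"

definition hereditarily_pseudocompact_space :: "'a topology \<Rightarrow> bool" where
  "hereditarily_pseudocompact_space X \<longleftrightarrow>
     (\<forall>S. S \<subseteq> topspace X \<longrightarrow> pseudocompact_space (subtopology X S))"

end

theory Submission
  imports Defs
begin


lemma lemA:
  fixes X :: "'a topology" and f :: "'a \<Rightarrow> real"
  assumes dp: "dense_pseudocompact_space X" and fc: "continuous_map X euclideanreal f"
  shows "finite (f ` topspace X)"
proof (rule ccontr)
  assume inf: "infinite (f ` topspace X)"
  have pcX: "pseudocompact_space X"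
    using dp unfolding dense_pseudocompact_space_def
    by (metis closure_of_topspace order_refl subtopology_topspace)
  hence bd: "bounded (f ` topspace X)" using fc unfolding pseudocompact_space_def by blast
  obtain c where c: "c islimpt (f ` topspace X)"
    using bounded_infinite_imp_islimpt[OF order_refl bd inf] by blast
  define g where "g x = \<bar>f x - c\<bar>" for x
  have gc: "continuous_map X euclideanreal g"
    unfolding g_def by (intro continuous_intros fc)
  define P where "P = {x \<in> topspace X. g x \<in> {0<..}}"
  define Z where "Z = {x \<in> topspace X. g x \<in> {0}}"
  define I where "I = X interior_of Z"
  define D where "D = P \<union> I"
  have Po: "openin X P" unfolding P_def by (rule openin_continuous_map_preimage[OF gc]) auto
  have Io: "openin X I" unfolding I_def by simp
  have IZ: "I \<subseteq> Z" unfolding I_def by (rule interior_of_subset)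
  have Dsub: "D \<subseteq> topspace X" unfolding D_def P_def I_def using interior_of_subset_topspace[of X Z] by auto
  have Ddense: "X closure_of D = topspace X"
  proof
    show "X closure_of D \<subseteq> topspace X" by (rule closure_of_subset_topspace)
    show "topspace X \<subseteq> X closure_of D"
    proof
      fix x assume x: "x \<in> topspace X"
      show "x \<in> X closure_of D" unfolding in_closure_of
      proof (intro conjI x allI impI)
        fix T assume T: "x \<in> T \<and> openin X T"
        show "\<exists>y. y \<in> D \<and> y \<in> T"
        proof (cases "T \<inter> P = {}")
          case False thus ?thesis unfolding D_def by blast
        next
          case True
          have "T \<subseteq> Z"
          proof
            fix y assume y: "y \<in> T"
            hence "y \<in> topspace X" using T openin_subset by blast
            thus "y \<in> Z" using True y unfolding P_def Z_def g_def by auto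
          qed
          hence "T \<subseteq> I" unfolding I_def using T interior_of_maximal by blast
          thus ?thesis using T unfolding D_def by blast
        qed
      qed
    qed
  qed
  define h where "h x = inverse (g x)" for x
  have PD: "P \<subseteq> D" and ID: "I \<subseteq> D" unfolding D_def by auto
  have hc: "continuous_map (subtopology X D) euclideanreal h"
  proof (rule pasting_lemma[where I="{True,False}" and T="\<lambda>b. if b then P else I"
        and f="\<lambda>b. if b then h else (\<lambda>x. 0)"])
    fix i :: bool assume "i \<in> {True, False}"
    show "openin (subtopology X D) (if i then P else I)"
      using Po Io PD ID by (auto simp: openin_subtopology)
  next
    fix i :: bool assume "i \<in> {True, False}"
    show "continuous_map (subtopology (subtopology X D) (if i then P else I)) euclideanreal
          (if i then h else (\<lambda>x. 0))"
    proof (cases i)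
      case True
      have "subtopology (subtopology X D) P = subtopology X P"
        using PD by (simp add: subtopology_subtopology Int_absorb1 inf.absorb2)
      moreover have "continuous_map (subtopology X P) euclideanreal h"
        unfolding h_def
        by (intro continuous_map_real_inverse continuous_map_from_subtopology gc)
           (auto simp: P_def)
      ultimately show ?thesis using True by simp
    qed simp
  next
    fix i j :: bool and x
    assume "i \<in> {True, False}" "j \<in> {True, False}"
      "x \<in> topspace (subtopology X D) \<inter> (if i then P else I) \<inter> (if j then P else I)"
    thus "(if i then h else (\<lambda>x. 0)) x = (if j then h else (\<lambda>x. 0)) x"
      using IZ unfolding P_def Z_def h_def by (auto split: if_splits)
  next
    fix x assume "x \<in> topspace (subtopology X D)"
    thus "\<exists>j. j \<in> {True, False} \<and> x \<in> (if j then P else I) \<and> h x = (if j then h else (\<lambda>x. 0)) x"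
      using IZ unfolding D_def Z_def h_def by auto
  qed
  have "pseudocompact_space (subtopology X D)"
    using dp Dsub Ddense unfolding dense_pseudocompact_space_def by blast
  hence "bounded (h ` topspace (subtopology X D))"
    using hc unfolding pseudocompact_space_def by blast
  then obtain B0 where B0: "\<And>x. x \<in> D \<Longrightarrow> \<bar>h x\<bar> \<le> B0"
    using Dsub by (auto simp: bounded_real Int_absorb1)
  define B where "B = max B0 0"
  have B: "\<And>x. x \<in> D \<Longrightarrow> \<bar>h x\<bar> \<le> B" using B0 unfolding B_def by force
  have "B \<ge> 0" unfolding B_def by simp
  obtain y where y: "y \<in> f ` topspace X" "y \<noteq> c" "dist y c < inverse (B + 1)"
    using c unfolding islimpt_approachable by (metis \<open>B \<ge> 0\<close> inverse_positive_iff_positive add_nonneg_pos zero_less_one)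
  then obtain x where x: "x \<in> topspace X" "y = f x" by blast
  have gx: "0 < g x" "g x < inverse (B+1)" using y x unfolding g_def by (auto simp: dist_real_def)
  hence "x \<in> D" using x unfolding D_def P_def by auto
  hence "h x \<le> B" using B by force
  moreover have "h x > B + 1" unfolding h_def using gx \<open>B \<ge> 0\<close>
    by (metis inverse_less_iff_less inverse_inverse_eq add_nonneg_pos zero_less_one inverse_positive_iff_positive)
  ultimately show False by simp
qed


lemma sepclopen:
  fixes X :: "'a topology"
  assumes ty: "tychonoff_space X"
    and H: "\<forall>f::'a \<Rightarrow> real. continuous_map X euclideanreal f \<longrightarrow> finite (f ` topspace X)"
    and x: "x \<in> topspace X" and y: "y \<in> topspace X" and xy: "x \<noteq> y"
  shows "\<exists>S. openin X S \<and> closedin X S \<and> x \<in> S \<and> y \<notin> S"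
proof -
  have cr: "completely_regular_space X" and t1: "t1_space X" using ty unfolding tychonoff_space_def by auto
  have "closedin X {y}" using t1 y by (rule closedin_t1_singleton)
  then obtain g :: "'a \<Rightarrow> real" where g: "continuous_map X (top_of_set {0..1}) g" "g x = 0" "g ` {y} \<subseteq> {1}"
    using cr x xy unfolding completely_regular_space_def by blast
  have gc: "continuous_map X euclideanreal g" using g(1) continuous_map_in_subtopology by blast
  have F: "finite (g ` topspace X)" using H gc by blast
  define S where "S = {z \<in> topspace X. g z \<in> {0}}"
  have "closedin X S" unfolding S_def by (rule closedin_continuous_map_preimage[OF gc]) simp
  moreover have "openin X S"
  proof -
    have "open (- (g ` topspace X - {0}))" using F by (intro open_Compl finite_imp_closed) simp
    hence "openin X {z \<in> topspace X. g z \<in> - (g ` topspace X - {0})}"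
      by (intro openin_continuous_map_preimage[OF gc]) simp
    moreover have "{z \<in> topspace X. g z \<in> - (g ` topspace X - {0})} = S" unfolding S_def by auto
    ultimately show ?thesis by simp
  qed
  ultimately show ?thesis using g x unfolding S_def by auto
qed

definition clopen_in where "clopen_in X S \<longleftrightarrow> openin X S \<and> closedin X S"

lemma splitclopen:
  fixes X :: "'a topology"
  assumes ty: "tychonoff_space X"
    and H: "\<forall>f::'a \<Rightarrow> real. continuous_map X euclideanreal f \<longrightarrow> finite (f ` topspace X)"
    and C: "clopen_in X C" "infinite C"
  shows "\<exists>B. B \<subseteq> C \<and> clopen_in X B \<and> infinite B \<and> C - B \<noteq> {}"
proof -
  obtain x where x: "x \<in> C" using C(2) by (metis ex_in_conv finite.emptyI)
  obtain y where y: "y \<in> C" "y \<noteq> x" using C(2) by (metis finite_insert infinite_imp_nonempty insertI1 insert_Diff_single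
        finite.emptyI Diff_iff ex_in_conv insert_absorb singletonI)
  have Ct: "C \<subseteq> topspace X" using C(1) unfolding clopen_in_def by (simp add: openin_subset)
  obtain S where S: "openin X S" "closedin X S" "x \<in> S" "y \<notin> S"
    using sepclopen[OF ty H, of x y] x y Ct by auto
  have c1: "clopen_in X (C \<inter> S)" using C(1) S unfolding clopen_in_def by auto
  have c2: "clopen_in X (C - S)" using C(1) S unfolding clopen_in_def by auto
  have "C = (C \<inter> S) \<union> (C - S)" by blast
  hence "infinite (C \<inter> S) \<or> infinite (C - S)" using C(2) by (metis finite_Un)
  thus ?thesis
  proof
    assume "infinite (C \<inter> S)" thus ?thesis using c1 y S by (intro exI[of _ "C \<inter> S"]) auto
  next
    assume "infinite (C - S)" thus ?thesis using c2 x S by (intro exI[of _ "C - S"]) auto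
  qed
qed


lemma lemB:
  fixes X :: "'a topology"
  assumes ty: "tychonoff_space X"
    and H: "\<forall>f::'a \<Rightarrow> real. continuous_map X euclideanreal f \<longrightarrow> finite (f ` topspace X)"
  shows "finite (topspace X)"
proof (rule ccontr)
  assume infX: "infinite (topspace X)"
  define nxt where "nxt C = (SOME B. B \<subseteq> C \<and> clopen_in X B \<and> infinite B \<and> C - B \<noteq> {})" for C
  define Bs where "Bs n = (nxt ^^ n) (topspace X)" for n
  have Bs0: "Bs 0 = topspace X" unfolding Bs_def by simp
  have BsS: "Bs (Suc n) = nxt (Bs n)" for n unfolding Bs_def by simp
  have nxtP: "nxt C \<subseteq> C \<and> clopen_in X (nxt C) \<and> infinite (nxt C) \<and> C - nxt C \<noteq> {}"
    if "clopen_in X C" "infinite C" for C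
    unfolding nxt_def by (rule someI_ex) (rule splitclopen[OF ty H that])
  have inv: "clopen_in X (Bs n) \<and> infinite (Bs n)" for n
  proof (induction n)
    case 0 thus ?case using infX by (simp add: Bs0 clopen_in_def)
  next
    case (Suc n) thus ?case using nxtP by (simp add: BsS)
  qed
  have sub: "Bs (Suc n) \<subseteq> Bs n" for n using nxtP inv BsS by metis
  have ne: "Bs n - Bs (Suc n) \<noteq> {}" for n using nxtP inv BsS by metis
  have dec: "m \<le> n \<Longrightarrow> Bs n \<subseteq> Bs m" for m n
    by (rule lift_Suc_antimono_le[of Bs, OF sub])
  have op: "openin X (Bs n)" and cl: "closedin X (Bs n)" for n using inv unfolding clopen_in_def by auto
  have top: "Bs n \<subseteq> topspace X" for n using op openin_subset by blast
  define k where "k x = (LEAST n. x \<notin> Bs n)" for x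
  define f :: "'a \<Rightarrow> real" where "f x = (if (\<exists>n. x \<notin> Bs n) then (1/2)^(k x) else 0)" for x
  have kval: "k x = Suc m" if "x \<in> Bs m" "x \<notin> Bs (Suc m)" for x m
    unfolding k_def
  proof (rule Least_equality)
    show "x \<notin> Bs (Suc m)" by fact
    fix y assume "x \<notin> Bs y"
    thus "Suc m \<le> y" using that dec[of y m] by (metis not_less_eq_eq subsetD)
  qed
  have fval: "f x = (1/2)^(Suc m)" if "x \<in> Bs m" "x \<notin> Bs (Suc m)" for x m
    using kval[OF that] that unfolding f_def by auto
  have layer: "\<exists>m. x \<in> Bs m \<and> x \<notin> Bs (Suc m)" if xt: "x \<in> topspace X" and ex: "\<exists>n. x \<notin> Bs n" for x
  proof -
    obtain n where n: "x \<notin> Bs n" using ex by blast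
    define j where "j = k x"
    have j1: "x \<notin> Bs j" unfolding j_def k_def by (rule LeastI[of _ n]) (rule n)
    have "j \<noteq> 0"
    proof
      assume "j = 0" with j1 have "x \<notin> Bs 0" by simp
      with xt Bs0 show False by simp
    qed
    then obtain m where m: "j = Suc m" by (cases j) auto
    have "x \<in> Bs m" using not_less_Least[of m "\<lambda>n. x \<notin> Bs n"] m unfolding j_def k_def by auto
    thus ?thesis using j1 m by blast
  qed
  have fc: "continuous_map X euclideanreal f"
    unfolding continuous_map_openin_preimage_eq
  proof (intro conjI allI impI)
    show "f \<in> topspace X \<rightarrow> topspace euclideanreal" by simp
    fix U :: "real set" assume "openin euclideanreal U"
    hence U: "open U" by simp
    show "openin X (topspace X \<inter> f -` U)"
      unfolding openin_subopen[of X "topspace X \<inter> f -` U"]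
    proof
      fix x assume x: "x \<in> topspace X \<inter> f -` U"
      show "\<exists>T. openin X T \<and> x \<in> T \<and> T \<subseteq> topspace X \<inter> f -` U"
      proof (cases "\<exists>n. x \<notin> Bs n")
        case True
        then obtain m where m: "x \<in> Bs m" "x \<notin> Bs (Suc m)" using layer x by blast
        have "openin X (Bs m - Bs (Suc m))" using op cl by (simp add: openin_diff)
        moreover have "Bs m - Bs (Suc m) \<subseteq> topspace X \<inter> f -` U"
        proof
          fix z assume z: "z \<in> Bs m - Bs (Suc m)"
          hence "f z = f x" using fval[OF m] fval[of z m] by simp
          thus "z \<in> topspace X \<inter> f -` U" using z top[of m] x by auto
        qed
        ultimately show ?thesis using m by blast
      next
        case False
        hence f0: "f x = 0" unfolding f_def by auto
        hence "0 \<in> U" using x by auto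
        then obtain e where e: "e > 0" "ball 0 e \<subseteq> U" using U open_contains_ball by blast
        obtain N where N: "(1/2::real)^N < e" using real_arch_pow_inv[OF e(1), of "1/2"] by auto
        have "Bs N \<subseteq> topspace X \<inter> f -` U"
        proof
          fix z assume z: "z \<in> Bs N"
          show "z \<in> topspace X \<inter> f -` U"
          proof (cases "\<exists>n. z \<notin> Bs n")
            case False thus ?thesis using z top \<open>0 \<in> U\<close> unfolding f_def by auto
          next
            case True
            then obtain m where m: "z \<in> Bs m" "z \<notin> Bs (Suc m)" using layer z top by blast
            have "N \<le> m" using z m(2) dec[of "Suc m" N] by (metis not_less_eq_eq subsetD)
            hence "(1/2::real)^(Suc m) \<le> (1/2)^N" by (intro power_decreasing) auto
            moreover have "(1/2::real)^(Suc m) > 0" by simp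
            ultimately have "\<bar>f z\<bar> < e" using fval[OF m] N by linarith
            hence "f z \<in> ball 0 e" by (simp add: dist_real_def)
            thus ?thesis using e z top by auto
          qed
        qed
        thus ?thesis using False op by blast
      qed
    qed
  qed
  hence fin: "finite (f ` topspace X)" using H by blast
  have "\<forall>m. \<exists>a. a \<in> Bs m \<and> a \<notin> Bs (Suc m)" using ne by blast
  then obtain a where a: "\<And>m. a m \<in> Bs m \<and> a m \<notin> Bs (Suc m)" by metis
  have "(\<lambda>m. (1/2::real)^(Suc m)) ` UNIV \<subseteq> f ` topspace X"
    using a fval top by (metis (no_types, lifting) image_subsetI rev_image_eqI subsetD)
  moreover have "infinite ((\<lambda>m. (1/2::real)^(Suc m)) ` UNIV)"
  proof
    assume "finite ((\<lambda>m. (1/2::real)^(Suc m)) ` UNIV)"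
    moreover have "inj (\<lambda>m. (1/2::real)^(Suc m))"
      by (intro injI) (simp add: power_one_over)
    ultimately show False using finite_imageD by blast
  qed
  ultimately show False using fin finite_subset by blast
qed

lemma fin_pc:
  fixes X :: "'a topology"
  assumes "finite (topspace X)"
  shows "pseudocompact_space (subtopology X S)"
  unfolding pseudocompact_space_def
  using assms by (auto intro!: finite_imp_bounded)

theorem theorem3p3:
  fixes X :: "'a topology"
  assumes "tychonoff_space X"
  shows "(dense_pseudocompact_space X
            \<longleftrightarrow> (\<forall>f::'a \<Rightarrow> real. continuous_map X euclideanreal f \<longrightarrow> finite (f ` topspace X)))
       \<and> ((\<forall>f::'a \<Rightarrow> real. continuous_map X euclideanreal f \<longrightarrow> finite (f ` topspace X))
            \<longleftrightarrow> finite (topspace X))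
       \<and> (finite (topspace X) \<longleftrightarrow> hereditarily_pseudocompact_space X)"
proof -
  have A: "dense_pseudocompact_space X \<Longrightarrow> (\<forall>f::'a \<Rightarrow> real. continuous_map X euclideanreal f \<longrightarrow> finite (f ` topspace X))"
    using lemA by blast
  have B: "(\<forall>f::'a \<Rightarrow> real. continuous_map X euclideanreal f \<longrightarrow> finite (f ` topspace X)) \<Longrightarrow> finite (topspace X)"
    using lemB[OF assms] by blast
  have C: "finite (topspace X) \<Longrightarrow> (\<forall>f::'a \<Rightarrow> real. continuous_map X euclideanreal f \<longrightarrow> finite (f ` topspace X))"
    by blast
  have D: "finite (topspace X) \<Longrightarrow> hereditarily_pseudocompact_space X"
    unfolding hereditarily_pseudocompact_space_def using fin_pc by blast
  have E: "finite (topspace X) \<Longrightarrow> dense_pseudocompact_space X"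
    unfolding dense_pseudocompact_space_def using fin_pc by blast
  have F: "hereditarily_pseudocompact_space X \<Longrightarrow> dense_pseudocompact_space X"
    unfolding hereditarily_pseudocompact_space_def dense_pseudocompact_space_def by blast
  show ?thesis using A B C D E F by blast
qed

end
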